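(* Let $\{G^k\}$ be a $B$-strongly connected sequence of digraphs on $\{1,\dots,I\}$, let each $\mathbf{A}^k$ be compliant with $G^k$ (constant $\kappa>0$) and column stochastic, and let $\{\mathbf{u}_i^k\}_{k\ge0}\subset\mathbb{R}^m$, $i=1,\dots,I$, be signals. Consider the tracking protocol with $\phi_{(i)}^0=1$, $\mathbf{x}_{(i)}^0=\mathbf{u}_i^0$ and $$\phi_{(i)}^{k+1}=\sum_ja_{ij}^k\phi_{(j)}^k,\quad \mathbf{x}_{(i)}^{k+1}=\frac{1}{\phi_{(i)}^{k+1}}\sum_ja_{ij}^k\phi_{(j)}^k\mathbf{x}_{(j)}^k+\frac{1}{\phi_{(i)}^{k+1}}(\mathbf{u}_i^{k+1}-\mathbf{u}_i^k).$$ Then (a) $\sum_{i=1}^I\phi_{(i)}^k\mathbf{x}_{(i)}^k=\sum_{i=1}^I\mathbf{u}_i^k$ for all $k$; (b) if moreover $\lim_{k\to\infty}\|\mathbf{u}_i^{k+1}-\mathbf{u}_i^k\|=0$ for all $i$, then $\lim_{k\to\infty}\|\mathbf{x}_{(i)}^k-\bar{\mathbf{u}}^k\|=0$ for all $i$, where $\bar{\mathbf{u}}^k\triangleq\frac1I\sum_{i=1}^I\mathbf{u}_i^k$.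
   Context: A digraph at time $k$ is $G^k=(V,E^k)$, $V=\{1,\dots,I\}$, with edge $(j,i)\in E^k$ meaning $j$ can send to $i$. The sequence is $B$-strongly connected if there is an integer $B>0$ such that for every $k$ the digraph with edge set $\bigcup_{t=k}^{k+B-1}E^t$ is strongly connected. $\mathbf{A}^k$ is compliant with $G^k$ (constant $\kappa>0$) if $a_{ij}^k=0$ whenever $j\ne i$ and $(j,i)\notin E^k$, $a_{ij}^k\ge\kappa$ whenever $(j,i)\in E^k$, and $a_{ii}^k\ge\kappa$; it is column stochastic if its entries are nonnegative and $\mathbf{1}^T\mathbf{A}^k=\mathbf{1}^T$. *)

theory Defs
  imports "HOL-Analysis.Analysis"
begin

text \<open>Nodes are V = {1..I}. A time-varying digraph is E :: nat \<Rightarrow> (nat \<times> nat) set;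
  (j,i) \<in> E k means j can send to i at time k.\<close>

definition strongly_connected :: "nat set \<Rightarrow> (nat \<times> nat) set \<Rightarrow> bool" where
  "strongly_connected V F \<longleftrightarrow> (\<forall>i\<in>V. \<forall>j\<in>V. (i, j) \<in> F\<^sup>*)"

definition B_strongly_connected :: "nat \<Rightarrow> nat \<Rightarrow> (nat \<Rightarrow> (nat \<times> nat) set) \<Rightarrow> bool" where
  "B_strongly_connected I B E \<longleftrightarrow>
     B > 0 \<and> (\<forall>k. E k \<subseteq> {1..I} \<times> {1..I}) \<and>
     (\<forall>k. strongly_connected {1..I} (\<Union>t\<in>{k..<k+B}. E t))"

text \<open>A k i j is the entry a_ij^k.\<close>
definition compliant :: "nat \<Rightarrow> real \<Rightarrow> (nat \<times> nat) set \<Rightarrow> (nat \<Rightarrow> nat \<Rightarrow> real) \<Rightarrow> bool" where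
  "compliant I \<kappa> F a \<longleftrightarrow>
     (\<forall>i\<in>{1..I}. \<forall>j\<in>{1..I}. j \<noteq> i \<and> (j, i) \<notin> F \<longrightarrow> a i j = 0) \<and>
     (\<forall>i\<in>{1..I}. \<forall>j\<in>{1..I}. (j, i) \<in> F \<longrightarrow> a i j \<ge> \<kappa>) \<and>
     (\<forall>i\<in>{1..I}. a i i \<ge> \<kappa>)"

definition column_stochastic :: "nat \<Rightarrow> (nat \<Rightarrow> nat \<Rightarrow> real) \<Rightarrow> bool" where
  "column_stochastic I a \<longleftrightarrow>
     (\<forall>i\<in>{1..I}. \<forall>j\<in>{1..I}. a i j \<ge> 0) \<and>
     (\<forall>j\<in>{1..I}. (\<Sum>i=1..I. a i j) = 1)"

primrec phi :: "nat \<Rightarrow> (nat \<Rightarrow> nat \<Rightarrow> nat \<Rightarrow> real) \<Rightarrow> nat \<Rightarrow> nat \<Rightarrow> real" where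
  "phi I A 0 i = 1"
| "phi I A (Suc k) i = (\<Sum>j=1..I. A k i j * phi I A k j)"

primrec track :: "nat \<Rightarrow> (nat \<Rightarrow> nat \<Rightarrow> nat \<Rightarrow> real) \<Rightarrow> (nat \<Rightarrow> nat \<Rightarrow> 'v::real_vector)
    \<Rightarrow> nat \<Rightarrow> nat \<Rightarrow> 'v" where
  "track I A u 0 i = u 0 i"
| "track I A u (Suc k) i =
     (1 / phi I A (Suc k) i) *\<^sub>R (\<Sum>j=1..I. (A k i j * phi I A k j) *\<^sub>R track I A u k j)
     + (1 / phi I A (Suc k) i) *\<^sub>R (u (Suc k) i - u k i)"

end

theory Submission
  imports Defs
begin


lemma conv_lemma:
  fixes V \<epsilon> :: "nat \<Rightarrow> real"
  assumes T: "T > 0" and rho: "0 \<le> \<rho>" "\<rho> < 1" and V0: "\<And>k. 0 \<le> V k"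
    and rec: "\<And>k. V (k+T) \<le> \<rho> * V k + \<epsilon> k" and eps: "\<epsilon> \<longlonglongrightarrow> 0"
  shows "V \<longlonglongrightarrow> 0"
proof (rule LIMSEQ_I)
  fix r :: real assume r: "0 < r"
  define \<delta> where "\<delta> = (1-\<rho>)*r/2"
  have \<delta>: "\<delta> > 0" using r rho by (simp add: \<delta>_def)
  have \<delta>r: "\<delta>/(1-\<rho>) = r/2" using rho by (simp add: \<delta>_def field_simps)
  from LIMSEQ_D[OF eps \<delta>] obtain K where K: "\<And>k. k \<ge> K \<Longrightarrow> norm (\<epsilon> k) < \<delta>" by auto
  define M where "M = Max (V ` {K..<K+T})"
  have VM: "\<And>k. k\<in>{K..<K+T} \<Longrightarrow> V k \<le> M" unfolding M_def by (intro Max_ge) auto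
  have M0: "0 \<le> M" using VM[of K] V0[of K] T by auto
  have main: "V k \<le> \<rho>^((k-K) div T) * M + \<delta>/(1-\<rho>)" if "k \<ge> K" for k
    using that
  proof (induction k rule: less_induct)
    case (less k)
    show ?case
    proof (cases "k < K+T")
      case True
      then have "(k-K) div T = 0" using less.prems by simp
      moreover have "\<delta>/(1-\<rho>) \<ge> 0" using \<delta> rho by simp
      ultimately show ?thesis using VM[of k] True less.prems by simp
    next
      case False
      define k' where "k' = k - T"
      have kk: "k = k' + T" "k' \<ge> K" "k' < k" using False T less.prems by (auto simp: k'_def)
      have div: "(k-K) div T = Suc ((k'-K) div T)"
      proof -
        have "k - K = (k'-K) + T" using kk by simp
        then show ?thesis using T by simp
      qed
      have IH: "V k' \<le> \<rho>^((k'-K) div T) * M + \<delta>/(1-\<rho>)" using less.IH kk by auto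
      have "V k \<le> \<rho> * V k' + \<epsilon> k'" using rec[of k'] kk by simp
      also have "\<dots> \<le> \<rho> * (\<rho>^((k'-K) div T) * M + \<delta>/(1-\<rho>)) + \<delta>"
        using K[of k'] kk IH rho by (intro add_mono mult_left_mono) auto
      also have "\<dots> = \<rho>^((k-K) div T) * M + \<delta>/(1-\<rho>)"
        using rho unfolding div by (simp add: field_simps)
      finally show ?thesis .
    qed
  qed
  have "(\<lambda>n. \<rho>^n * M) \<longlonglongrightarrow> 0 * M"
    by (intro tendsto_mult LIMSEQ_power_zero tendsto_const) (use rho in auto)
  then have "(\<lambda>n. \<rho>^n * M) \<longlonglongrightarrow> 0" by simp
  from LIMSEQ_D[OF this, of "r/2"] r obtain N0 where N0: "\<And>n. n \<ge> N0 \<Longrightarrow> norm (\<rho>^n * M) < r/2" by auto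
  show "\<exists>no. \<forall>k\<ge>no. norm (V k - 0) < r"
  proof (intro exI allI impI)
    fix k assume k: "k \<ge> K + N0*T"
    have "N0*T div T \<le> (k-K) div T" by (rule div_le_mono) (use k in simp)
    then have n: "N0 \<le> (k-K) div T" using T by simp
    have "V k \<le> \<rho>^((k-K) div T) * M + r/2" using main[of k] k \<delta>r by simp
    also have "\<dots> < r" using N0[OF n] by simp
    finally show "norm (V k - 0) < r" using V0[of k] by simp
  qed
qed

lemma contr_lemma:
  fixes M :: "nat \<Rightarrow> nat \<Rightarrow> real" and v :: "nat \<Rightarrow> 'v::real_normed_vector"
  assumes fin: "finite N" and Mge: "\<And>i j. i\<in>N \<Longrightarrow> j\<in>N \<Longrightarrow> M i j \<ge> \<eta>"
    and col: "\<And>j. j\<in>N \<Longrightarrow> (\<Sum>i\<in>N. M i j) = 1"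
    and eta: "\<eta> = 0 \<or> (\<Sum>j\<in>N. v j) = 0" and eta0: "\<eta> \<ge> 0"
  shows "(\<Sum>i\<in>N. norm (\<Sum>j\<in>N. M i j *\<^sub>R v j)) \<le> (1 - real (card N) * \<eta>) * (\<Sum>j\<in>N. norm (v j))"
proof -
  have eq: "(\<Sum>j\<in>N. M i j *\<^sub>R v j) = (\<Sum>j\<in>N. (M i j - \<eta>) *\<^sub>R v j)" for i
  proof -
    have "(\<Sum>j\<in>N. \<eta> *\<^sub>R v j) = 0"
      using eta by (auto simp: scaleR_right.sum[symmetric])
    then show ?thesis by (simp add: scaleR_left_diff_distrib sum_subtractf)
  qed
  have "(\<Sum>i\<in>N. norm (\<Sum>j\<in>N. M i j *\<^sub>R v j)) \<le> (\<Sum>i\<in>N. \<Sum>j\<in>N. (M i j - \<eta>) * norm (v j))"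
  proof (rule sum_mono)
    fix i assume i: "i \<in> N"
    have "norm (\<Sum>j\<in>N. M i j *\<^sub>R v j) \<le> (\<Sum>j\<in>N. norm ((M i j - \<eta>) *\<^sub>R v j))"
      unfolding eq by (rule norm_sum)
    also have "\<dots> = (\<Sum>j\<in>N. (M i j - \<eta>) * norm (v j))"
      using Mge i by (intro sum.cong) auto
    finally show "norm (\<Sum>j\<in>N. M i j *\<^sub>R v j) \<le> (\<Sum>j\<in>N. (M i j - \<eta>) * norm (v j))" .
  qed
  also have "\<dots> = (\<Sum>j\<in>N. (\<Sum>i\<in>N. (M i j - \<eta>)) * norm (v j))"
    by (subst sum.swap) (simp add: sum_distrib_right)
  also have "\<dots> = (\<Sum>j\<in>N. (1 - real (card N) * \<eta>) * norm (v j))"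
    using col by (intro sum.cong) (auto simp: sum_subtractf)
  also have "\<dots> = (1 - real (card N) * \<eta>) * (\<Sum>j\<in>N. norm (v j))"
    by (simp add: sum_distrib_left)
  finally show ?thesis .
qed

lemma crossing:
  assumes "(a,b) \<in> F\<^sup>*" "a \<in> X" "b \<notin> X"
  shows "\<exists>x y. (x,y) \<in> F \<and> x \<in> X \<and> y \<notin> X"
  using assms by (induction rule: rtrancl_induct) auto




primrec Pm :: "nat \<Rightarrow> (nat\<Rightarrow>nat\<Rightarrow>nat\<Rightarrow>real) \<Rightarrow> nat \<Rightarrow> nat \<Rightarrow> nat \<Rightarrow> nat \<Rightarrow> real" where
  "Pm I A s 0 i j = (if i = j then 1 else 0)"
| "Pm I A s (Suc n) i j = (\<Sum>l=1..I. A (s+n) i l * Pm I A s n l j)"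

locale ps =
  fixes I B :: nat and \<kappa> :: real and E :: "nat \<Rightarrow> (nat \<times> nat) set"
    and A :: "nat \<Rightarrow> nat \<Rightarrow> nat \<Rightarrow> real"
  assumes bsc: "B_strongly_connected I B E" and kpos: "\<kappa> > 0"
    and comp: "\<And>k. compliant I \<kappa> (E k) (A k)"
    and cs: "\<And>k. column_stochastic I (A k)"
begin

lemma A_nonneg: "i\<in>{1..I} \<Longrightarrow> j\<in>{1..I} \<Longrightarrow> A k i j \<ge> 0"
  using cs[of k] unfolding column_stochastic_def by auto
lemma A_col: "j\<in>{1..I} \<Longrightarrow> (\<Sum>i=1..I. A k i j) = 1"
  using cs[of k] unfolding column_stochastic_def by auto
lemma A_diag: "i\<in>{1..I} \<Longrightarrow> A k i i \<ge> \<kappa>"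
  using comp[of k] unfolding compliant_def by auto
lemma A_edge: "i\<in>{1..I} \<Longrightarrow> j\<in>{1..I} \<Longrightarrow> (j,i) \<in> E k \<Longrightarrow> A k i j \<ge> \<kappa>"
  using comp[of k] unfolding compliant_def by auto
lemma Bpos: "B > 0" using bsc unfolding B_strongly_connected_def by auto
lemma Esub: "E k \<subseteq> {1..I} \<times> {1..I}" using bsc unfolding B_strongly_connected_def by auto
lemma window: "strongly_connected {1..I} (\<Union>t\<in>{k..<k+B}. E t)"
  using bsc unfolding B_strongly_connected_def by auto

abbreviation "P \<equiv> Pm I A"

lemma P_nonneg: "i\<in>{1..I} \<Longrightarrow> j\<in>{1..I} \<Longrightarrow> P s n i j \<ge> 0"
proof (induction n arbitrary: i)
  case 0 then show ?case by simp
next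
  case (Suc n) then show ?case by (auto intro!: sum_nonneg mult_nonneg_nonneg A_nonneg)
qed

lemma P_col: "j\<in>{1..I} \<Longrightarrow> (\<Sum>i=1..I. P s n i j) = 1"
proof (induction n)
  case 0 then show ?case by simp
next
  case (Suc n)
  have "(\<Sum>i=1..I. P s (Suc n) i j) = (\<Sum>l=1..I. (\<Sum>i=1..I. A (s+n) i l) * P s n l j)"
    by (simp add: sum_distrib_right) (rule sum.swap)
  also have "\<dots> = (\<Sum>l=1..I. P s n l j)"
  proof (intro sum.cong refl)
    fix l assume "l\<in>{1..I}" then show "(\<Sum>i=1..I. A (s+n) i l) * P s n l j = P s n l j"
      using A_col[of l] by simp
  qed
  finally show ?case using Suc by simp
qed

definition R where "R s n j = {i\<in>{1..I}. P s n i j \<ge> \<kappa>^n}"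

lemma R_sub: "R s n j \<subseteq> {1..I}" unfolding R_def by auto

lemma R_edge:
  assumes "i \<in> R s n j" "j\<in>{1..I}" "i' \<in> {1..I}" "(i,i') \<in> E (s+n) \<or> i' = i"
  shows "i' \<in> R s (Suc n) j"
proof -
  have i: "i \<in> {1..I}" and Pi: "P s n i j \<ge> \<kappa>^n" using assms(1) unfolding R_def by auto
  have Ai: "A (s+n) i' i \<ge> \<kappa>" using assms(4) A_edge[OF assms(3) i] A_diag[OF assms(3)] by auto
  have "\<kappa>^Suc n \<le> A (s+n) i' i * P s n i j"
    using Ai Pi kpos by (simp add: mult_mono)
  also have "\<dots> \<le> (\<Sum>l=1..I. A (s+n) i' l * P s n l j)"
    using i assms by (intro member_le_sum) (auto intro!: mult_nonneg_nonneg A_nonneg P_nonneg)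
  finally show ?thesis using assms(3) unfolding R_def by simp
qed

lemma R_step: "i \<in> R s n j \<Longrightarrow> j\<in>{1..I} \<Longrightarrow> i \<in> R s (Suc n) j"
  by (meson R_edge R_sub subsetD)

lemma R_mono: "n \<le> m \<Longrightarrow> j\<in>{1..I} \<Longrightarrow> R s n j \<subseteq> R s m j"
proof (induction m rule: dec_induct)
  case base then show ?case by simp
next
  case (step m) then show ?case using R_step by blast
qed

lemma R0: "j\<in>{1..I} \<Longrightarrow> j \<in> R s n j"
  using R_mono[of 0 n j s] unfolding R_def by auto

lemma R_grow:
  assumes j: "j\<in>{1..I}" and ne: "R s n j \<noteq> {1..I}"
  shows "\<exists>y\<in>{1..I}. y \<notin> R s n j \<and> y \<in> R s (n+B) j"
proof -
  obtain b where b: "b\<in>{1..I}" "b \<notin> R s n j" using ne R_sub by blast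
  have "(j,b) \<in> (\<Union>t\<in>{s+n..<s+n+B}. E t)\<^sup>*"
    using window[of "s+n"] j b unfolding strongly_connected_def by auto
  from crossing[OF this R0[OF j] b(2)] obtain x y where
    xy: "(x,y) \<in> (\<Union>t\<in>{s+n..<s+n+B}. E t)" "x \<in> R s n j" "y \<notin> R s n j" by blast
  then obtain t where t: "t\<in>{s+n..<s+n+B}" "(x,y) \<in> E t" by auto
  have "(x,y) \<in> {1..I}\<times>{1..I}" using t Esub[of t] by blast
  then have y: "y \<in> {1..I}" by blast
  have "n \<le> t - s" using t by auto
  then have "x \<in> R s (t-s) j" using R_mono[of n "t-s" j s] xy j by auto
  moreover have "s + (t-s) = t" using t by auto
  ultimately have "y \<in> R s (Suc (t-s)) j" using R_edge[of x s "t-s" j y] t(2) y j by simp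
  moreover have "R s (Suc (t-s)) j \<subseteq> R s (n+B) j" using t j by (intro R_mono) auto
  ultimately have "y \<in> R s (n+B) j" by blast
  then show ?thesis using y xy(3) by blast
qed

lemma R_fin: "finite (R s n j)" by (rule finite_subset[OF R_sub]) simp

lemma R_card: "j\<in>{1..I} \<Longrightarrow> R s (m*B) j = {1..I} \<or> card (R s (m*B) j) \<ge> m+1"
proof (induction m)
  case 0
  have "R s (0*B) j \<noteq> {}" using R0[OF 0] by auto
  then have "card (R s (0*B) j) > 0" using R_fin by (simp add: card_gt_0_iff)
  then show ?case by simp
next
  case (Suc m)
  have sub0: "R s (m*B) j \<subseteq> R s (Suc m * B) j" by (rule R_mono) (use Suc.prems in auto)
  show ?case
  proof (cases "R s (m*B) j = {1..I}")
    case True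
    then have "{1..I} \<subseteq> R s (Suc m * B) j" using sub0 by simp
    then have "R s (Suc m * B) j = {1..I}" using R_sub[of s "Suc m * B" j] by (rule subset_antisym[rotated])
    then show ?thesis by simp
  next
    case False
    then have c: "card (R s (m*B) j) \<ge> m+1" using Suc by auto
    obtain y where y: "y\<in>{1..I}" "y \<notin> R s (m*B) j" "y \<in> R s (m*B+B) j"
      using R_grow[OF Suc.prems False] by blast
    have "m*B+B = Suc m * B" by simp
    then have y3: "y \<in> R s (Suc m*B) j" using y(3) by metis
    have sub: "insert y (R s (m*B) j) \<subseteq> R s (Suc m*B) j"
      using y3 sub0 by (rule insert_subsetI)
    have "card (insert y (R s (m*B) j)) = card (R s (m*B) j) + 1"
      using y(2) R_fin by simp
    moreover have "card (insert y (R s (m*B) j)) \<le> card (R s (Suc m*B) j)"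
      by (rule card_mono[OF R_fin sub])
    ultimately show ?thesis using c by simp
  qed
qed

lemma R_full: assumes j: "j\<in>{1..I}" shows "R s (I*B) j = {1..I}"
proof -
  have "card (R s (I*B) j) \<le> card {1..I}" by (rule card_mono[OF finite_atLeastAtMost R_sub])
  then have "card (R s (I*B) j) \<le> I" by simp
  show ?thesis
  proof (rule ccontr)
    assume "R s (I*B) j \<noteq> {1..I}"
    then have "I+1 \<le> card (R s (I*B) j)" using R_card[OF j, of s I] by simp
    then show False using \<open>card (R s (I*B) j) \<le> I\<close> by simp
  qed
qed

lemma P_pos: assumes i: "i\<in>{1..I}" and j: "j\<in>{1..I}" shows "P s (I*B) i j \<ge> \<kappa>^(I*B)"
proof -
  have "i \<in> R s (I*B) j" using R_full[OF j] i by simp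
  then show ?thesis unfolding R_def by simp
qed

end



context ps begin

lemma y_step: fixes x :: "nat \<Rightarrow> 'v::real_vector" shows "(\<Sum>j=1..I. P s (Suc n) i j *\<^sub>R x j) = (\<Sum>l=1..I. A (s+n) i l *\<^sub>R (\<Sum>j=1..I. P s n l j *\<^sub>R x j))"
proof -
  have "(\<Sum>j=1..I. P s (Suc n) i j *\<^sub>R x j) = (\<Sum>j=1..I. \<Sum>l=1..I. (A (s+n) i l * P s n l j) *\<^sub>R x j)"
    by (simp only: Pm.simps scaleR_sum_left)
  also have "\<dots> = (\<Sum>l=1..I. \<Sum>j=1..I. (A (s+n) i l * P s n l j) *\<^sub>R x j)" by (rule sum.swap)
  also have "\<dots> = (\<Sum>l=1..I. A (s+n) i l *\<^sub>R (\<Sum>j=1..I. P s n l j *\<^sub>R x j))"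
    by (simp add: scaleR_right.sum)
  finally show ?thesis .
qed

lemma delta_sum: fixes v :: "nat \<Rightarrow> 'v::real_vector" shows "i\<in>{1..I} \<Longrightarrow> (\<Sum>j=1..I. P s 0 i j *\<^sub>R v j) = v i"
proof -
  assume i: "i\<in>{1..I}"
  have "(\<Sum>j=1..I. P s 0 i j *\<^sub>R v j) = (\<Sum>j\<in>{1..I}. if j = i then v j else 0)"
    by (intro sum.cong refl) auto
  also have "\<dots> = v i" using i by (subst sum.delta) auto
  finally show ?thesis .
qed

lemma evol:
  fixes x e :: "nat \<Rightarrow> nat \<Rightarrow> 'v::real_normed_vector"
  assumes rec: "\<And>k i. i\<in>{1..I} \<Longrightarrow> x (Suc k) i = (\<Sum>j=1..I. A k i j *\<^sub>R x k j) + e (Suc k) i"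
  shows "(\<Sum>i=1..I. norm (x (s+n) i - (\<Sum>j=1..I. P s n i j *\<^sub>R x s j)))
          \<le> (\<Sum>t<n. \<Sum>i=1..I. norm (e (Suc (s+t)) i))"
proof (induction n)
  case 0
  have "(\<Sum>i=1..I. norm (x (s+0) i - (\<Sum>j=1..I. P s 0 i j *\<^sub>R x s j))) = 0"
  proof (intro sum.neutral ballI)
    fix i assume "i\<in>{1..I}"
    then have "(\<Sum>j=1..I. P s 0 i j *\<^sub>R x s j) = x s i" by (rule delta_sum)
    then show "norm (x (s+0) i - (\<Sum>j=1..I. P s 0 i j *\<^sub>R x s j)) = 0" by simp
  qed
  then show ?case by simp
next
  case (Suc n)
  define y where "y i = (\<Sum>j=1..I. P s n i j *\<^sub>R x s j)" for i
  have eq: "x (s + Suc n) i - (\<Sum>j=1..I. P s (Suc n) i j *\<^sub>R x s j)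
      = (\<Sum>l=1..I. A (s+n) i l *\<^sub>R (x (s+n) l - y l)) + e (Suc (s+n)) i" if i: "i\<in>{1..I}" for i
    unfolding y_step y_def[symmetric] using rec[OF i, of "s+n"]
    by (simp add: scaleR_right_diff_distrib sum_subtractf)
  have "(\<Sum>i=1..I. norm (x (s + Suc n) i - (\<Sum>j=1..I. P s (Suc n) i j *\<^sub>R x s j)))
      \<le> (\<Sum>i=1..I. norm (\<Sum>l=1..I. A (s+n) i l *\<^sub>R (x (s+n) l - y l)) + norm (e (Suc (s+n)) i))"
  proof (intro sum_mono)
    fix i assume i: "i\<in>{1..I}"
    show "norm (x (s + Suc n) i - (\<Sum>j=1..I. P s (Suc n) i j *\<^sub>R x s j))
      \<le> norm (\<Sum>l=1..I. A (s+n) i l *\<^sub>R (x (s+n) l - y l)) + norm (e (Suc (s+n)) i)"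
      unfolding eq[OF i] by (rule norm_triangle_ineq)
  qed
  also have "\<dots> = (\<Sum>i=1..I. norm (\<Sum>l=1..I. A (s+n) i l *\<^sub>R (x (s+n) l - y l))) + (\<Sum>i=1..I. norm (e (Suc (s+n)) i))"
    by (rule sum.distrib)
  also have "(\<Sum>i=1..I. norm (\<Sum>l=1..I. A (s+n) i l *\<^sub>R (x (s+n) l - y l))) \<le> (1 - real (card {1..I}) * 0) * (\<Sum>l=1..I. norm (x (s+n) l - y l))"
    by (rule contr_lemma) (use A_col A_nonneg in auto)
  also have "(\<Sum>l=1..I. norm (x (s+n) l - y l)) \<le> (\<Sum>t<n. \<Sum>i=1..I. norm (e (Suc (s+t)) i))"
    using Suc.IH unfolding y_def by simp
  finally show ?case by simp
qed

lemma phi_pos: "i\<in>{1..I} \<Longrightarrow> phi I A k i > 0"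
proof (induction k arbitrary: i)
  case 0 then show ?case by simp
next
  case (Suc k)
  have "0 < A k i i * phi I A k i" using Suc kpos A_diag[OF Suc.prems, of k] by simp
  also have "\<dots> \<le> (\<Sum>j=1..I. A k i j * phi I A k j)"
  proof (intro member_le_sum)
    fix j assume "j \<in> {1..I} - {i}"
    then show "0 \<le> A k i j * phi I A k j"
      using Suc.IH[of j] Suc.prems A_nonneg[of i j k] by (auto intro!: mult_nonneg_nonneg)
  qed (use Suc.prems in auto)
  finally show ?case by simp
qed

lemma phi_sum: "(\<Sum>i=1..I. phi I A k i) = real I"
proof (induction k)
  case 0 then show ?case by simp
next
  case (Suc k)
  have "(\<Sum>i=1..I. phi I A (Suc k) i) = (\<Sum>j=1..I. (\<Sum>i=1..I. A k i j) * phi I A k j)"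
    by (simp add: sum_distrib_right) (rule sum.swap)
  also have "\<dots> = (\<Sum>j=1..I. phi I A k j)"
  proof (intro sum.cong refl)
    fix l assume "l\<in>{1..I}" then show "(\<Sum>i=1..I. A k i l) * phi I A k l = phi I A k l"
      using A_col[of l] by simp
  qed
  finally show ?case using Suc by simp
qed

lemma phi_nonneg: "i\<in>{1..I} \<Longrightarrow> phi I A k i \<ge> 0"
  using phi_pos less_imp_le by blast

lemma phi_le: "i\<in>{1..I} \<Longrightarrow> phi I A k i \<le> real I"
  using member_le_sum[of i "{1..I}" "phi I A k"] phi_pos phi_sum by (simp add: less_imp_le)

lemma phi_evol: "i\<in>{1..I} \<Longrightarrow> phi I A (s+n) i = (\<Sum>j=1..I. P s n i j * phi I A s j)"
proof -
  assume i: "i\<in>{1..I}"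
  have "(\<Sum>i=1..I. norm (phi I A (s+n) i - (\<Sum>j=1..I. P s n i j *\<^sub>R phi I A s j)))
          \<le> (\<Sum>t<n. \<Sum>i=1..I. norm ((\<lambda>_ _. 0::real) (Suc (s+t)) i))"
    by (rule evol) simp
  then have "(\<Sum>i=1..I. norm (phi I A (s+n) i - (\<Sum>j=1..I. P s n i j *\<^sub>R phi I A s j))) \<le> 0" by simp
  moreover have "norm (phi I A (s+n) i - (\<Sum>j=1..I. P s n i j *\<^sub>R phi I A s j))
     \<le> (\<Sum>i=1..I. norm (phi I A (s+n) i - (\<Sum>j=1..I. P s n i j *\<^sub>R phi I A s j)))"
    using i by (intro member_le_sum) auto
  ultimately show ?thesis by simp
qed

lemma phi_lb: assumes I1: "I \<ge> 1" and k: "k \<ge> I*B" and i: "i\<in>{1..I}"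
  shows "phi I A k i \<ge> \<kappa>^(I*B)"
proof -
  have kk: "k = (k - I*B) + I*B" using k by simp
  have "\<kappa>^(I*B) \<le> \<kappa>^(I*B) * real I" using I1 kpos by simp
  also have "\<dots> = (\<Sum>j=1..I. \<kappa>^(I*B) * phi I A (k - I*B) j)"
    unfolding sum_distrib_left[symmetric] phi_sum by simp
  also have "\<dots> \<le> (\<Sum>j=1..I. P (k-I*B) (I*B) i j * phi I A (k - I*B) j)"
    using i by (intro sum_mono mult_right_mono P_pos) (auto simp: phi_nonneg)
  also have "\<dots> = phi I A k i" using phi_evol[OF i, of "k-I*B" "I*B"] kk by simp
  finally show ?thesis .
qed

end



context ps begin

lemma z_rec:
  fixes u :: "nat \<Rightarrow> nat \<Rightarrow> 'v::real_vector"
  assumes i: "i\<in>{1..I}"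
  shows "phi I A (Suc k) i *\<^sub>R track I A u (Suc k) i
     = (\<Sum>j=1..I. A k i j *\<^sub>R (phi I A k j *\<^sub>R track I A u k j)) + (u (Suc k) i - u k i)"
proof -
  have p: "phi I A (Suc k) i \<noteq> 0" using phi_pos[OF i, of "Suc k"] by (metis order_less_irrefl)
  have "phi I A (Suc k) i *\<^sub>R track I A u (Suc k) i
     = (\<Sum>j=1..I. (A k i j * phi I A k j) *\<^sub>R track I A u k j) + (u (Suc k) i - u k i)"
    using p by (simp only: track.simps scaleR_right_distrib scaleR_scaleR) simp
  then show ?thesis by (simp add: scaleR_scaleR)
qed

lemma partA:
  fixes u :: "nat \<Rightarrow> nat \<Rightarrow> 'v::real_vector"
  shows "(\<Sum>i=1..I. phi I A k i *\<^sub>R track I A u k i) = (\<Sum>i=1..I. u k i)"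
proof (induction k)
  case 0 then show ?case by simp
next
  case (Suc k)
  have "(\<Sum>i=1..I. phi I A (Suc k) i *\<^sub>R track I A u (Suc k) i)
     = (\<Sum>i=1..I. (\<Sum>j=1..I. A k i j *\<^sub>R (phi I A k j *\<^sub>R track I A u k j)) + (u (Suc k) i - u k i))"
    by (intro sum.cong refl z_rec)
  also have "\<dots> = (\<Sum>i=1..I. \<Sum>j=1..I. A k i j *\<^sub>R (phi I A k j *\<^sub>R track I A u k j))
        + ((\<Sum>i=1..I. u (Suc k) i) - (\<Sum>i=1..I. u k i))"
    by (simp only: sum.distrib sum_subtractf)
  also have "(\<Sum>i=1..I. \<Sum>j=1..I. A k i j *\<^sub>R (phi I A k j *\<^sub>R track I A u k j))
     = (\<Sum>j=1..I. \<Sum>i=1..I. A k i j *\<^sub>R (phi I A k j *\<^sub>R track I A u k j))" by (rule sum.swap)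
  also have "\<dots> = (\<Sum>j=1..I. (\<Sum>i=1..I. A k i j) *\<^sub>R (phi I A k j *\<^sub>R track I A u k j))"
    by (simp only: scaleR_sum_left)
  also have "(\<Sum>j=1..I. (\<Sum>i=1..I. A k i j) *\<^sub>R (phi I A k j *\<^sub>R track I A u k j))
      = (\<Sum>j=1..I. phi I A k j *\<^sub>R track I A u k j)"
  proof (intro sum.cong refl)
    fix l assume "l\<in>{1..I}" then show "(\<Sum>i=1..I. A k i l) *\<^sub>R (phi I A k l *\<^sub>R track I A u k l) = phi I A k l *\<^sub>R track I A u k l"
      using A_col[of l] by simp
  qed
  finally show ?case using Suc by simp
qed

end



context ps begin

definition W :: "(nat \<Rightarrow> nat \<Rightarrow> 'v::real_normed_vector) \<Rightarrow> nat \<Rightarrow> nat \<Rightarrow> 'v" where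
  "W u k i = phi I A k i *\<^sub>R track I A u k i - (phi I A k i / real I) *\<^sub>R (\<Sum>j=1..I. u k j)"

definition ee :: "(nat \<Rightarrow> nat \<Rightarrow> 'v::real_normed_vector) \<Rightarrow> nat \<Rightarrow> nat \<Rightarrow> 'v" where
  "ee u k i = (u k i - u (k-1) i) - (phi I A k i / real I) *\<^sub>R ((\<Sum>j=1..I. u k j) - (\<Sum>j=1..I. u (k-1) j))"

lemma w_rec:
  fixes u :: "nat \<Rightarrow> nat \<Rightarrow> 'v::real_normed_vector"
  assumes i: "i\<in>{1..I}"
  shows "W u (Suc k) i = (\<Sum>j=1..I. A k i j *\<^sub>R W u k j) + ee u (Suc k) i"
proof -
  define S where "S = (\<Sum>j=1..I. u k j)"
  define S' where "S' = (\<Sum>j=1..I. u (Suc k) j)"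
  define Z where "Z j = phi I A k j *\<^sub>R track I A u k j" for j
  define c where "c = phi I A (Suc k) i / real I"
  have "(\<Sum>j=1..I. A k i j *\<^sub>R W u k j)
      = (\<Sum>j=1..I. A k i j *\<^sub>R Z j - (A k i j * (phi I A k j / real I)) *\<^sub>R S)"
    unfolding W_def Z_def S_def by (simp add: scaleR_right_diff_distrib)
  also have "\<dots> = (\<Sum>j=1..I. A k i j *\<^sub>R Z j) - (\<Sum>j=1..I. A k i j * (phi I A k j / real I)) *\<^sub>R S"
    by (simp only: sum_subtractf scaleR_sum_left)
  also have "(\<Sum>j=1..I. A k i j * (phi I A k j / real I)) = c"
    unfolding c_def by (simp add: sum_divide_distrib)
  finally have 1: "(\<Sum>j=1..I. A k i j *\<^sub>R W u k j) = (\<Sum>j=1..I. A k i j *\<^sub>R Z j) - c *\<^sub>R S" .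
  have 2: "W u (Suc k) i = (\<Sum>j=1..I. A k i j *\<^sub>R Z j) + (u (Suc k) i - u k i) - c *\<^sub>R S'"
    unfolding W_def z_rec[OF i] Z_def c_def S'_def ..
  have 3: "ee u (Suc k) i = (u (Suc k) i - u k i) - c *\<^sub>R (S' - S)"
    unfolding ee_def c_def S_def S'_def by simp
  show ?thesis unfolding 1 2 3 by (simp add: algebra_simps)
qed

lemma w_sum:
  fixes u :: "nat \<Rightarrow> nat \<Rightarrow> 'v::real_normed_vector"
  assumes I1: "I \<ge> 1"
  shows "(\<Sum>i=1..I. W u k i) = 0"
proof -
  have "(\<Sum>i=1..I. W u k i) = (\<Sum>i=1..I. u k i) - (\<Sum>i=1..I. phi I A k i / real I) *\<^sub>R (\<Sum>j=1..I. u k j)"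
    unfolding W_def by (simp only: sum_subtractf scaleR_sum_left partA)
  also have "(\<Sum>i=1..I. phi I A k i / real I) = 1"
    unfolding sum_divide_distrib[symmetric] phi_sum using I1 by simp
  finally show ?thesis by simp
qed

lemma e_bound:
  fixes u :: "nat \<Rightarrow> nat \<Rightarrow> 'v::real_normed_vector"
  assumes i: "i\<in>{1..I}"
  shows "norm (ee u (Suc k) i) \<le> norm (u (Suc k) i - u k i) + (\<Sum>j=1..I. norm (u (Suc k) j - u k j))"
proof -
  define c where "c = phi I A (Suc k) i / real I"
  have c: "0 \<le> c" "c \<le> 1" using phi_nonneg[OF i, of "Suc k"] phi_le[OF i, of "Suc k"] i
    by (auto simp del: phi.simps simp: c_def divide_le_eq_1)
  have D: "(\<Sum>j=1..I. u (Suc k) j) - (\<Sum>j=1..I. u k j) = (\<Sum>j=1..I. u (Suc k) j - u k j)"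
    by (simp add: sum_subtractf)
  have "norm (ee u (Suc k) i) = norm ((u (Suc k) i - u k i) - c *\<^sub>R (\<Sum>j=1..I. u (Suc k) j - u k j))"
    unfolding ee_def c_def by (simp add: sum_subtractf)
  also have "\<dots> \<le> norm (u (Suc k) i - u k i) + norm (c *\<^sub>R (\<Sum>j=1..I. u (Suc k) j - u k j))"
    by (rule norm_triangle_ineq4)
  also have "norm (c *\<^sub>R (\<Sum>j=1..I. u (Suc k) j - u k j)) \<le> norm (\<Sum>j=1..I. u (Suc k) j - u k j)"
    using c by (simp add: mult_left_le_one_le)
  also have "\<dots> \<le> (\<Sum>j=1..I. norm (u (Suc k) j - u k j))" by (rule norm_sum)
  finally show ?thesis by simp
qed

end



context ps begin

lemma Vrec:
  fixes u :: "nat \<Rightarrow> nat \<Rightarrow> 'v::real_normed_vector"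
  assumes I1: "I \<ge> 1"
  shows "(\<Sum>i=1..I. norm (W u (k + I*B) i)) \<le> (1 - real I * \<kappa>^(I*B)) * (\<Sum>i=1..I. norm (W u k i))
     + (\<Sum>t<I*B. \<Sum>i=1..I. norm (u (Suc (k+t)) i - u (k+t) i) + (\<Sum>j=1..I. norm (u (Suc (k+t)) j - u (k+t) j)))"
proof -
  define y where "y i = (\<Sum>j=1..I. P k (I*B) i j *\<^sub>R W u k j)" for i
  have ev: "(\<Sum>i=1..I. norm (W u (k + I*B) i - y i)) \<le> (\<Sum>t<I*B. \<Sum>i=1..I. norm (ee u (Suc (k+t)) i))"
    unfolding y_def by (rule evol[OF w_rec])
  have ct: "(\<Sum>i=1..I. norm (y i)) \<le> (1 - real (card {1..I}) * \<kappa>^(I*B)) * (\<Sum>i=1..I. norm (W u k i))"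
    unfolding y_def
  proof (rule contr_lemma)
    show "\<kappa>^(I*B) = 0 \<or> (\<Sum>j=1..I. W u k j) = 0" using w_sum[OF I1, of u k] by (rule disjI2)
  qed (use P_pos P_col kpos in auto)
  have "(\<Sum>i=1..I. norm (W u (k + I*B) i)) \<le> (\<Sum>i=1..I. norm (y i) + norm (W u (k + I*B) i - y i))"
    by (intro sum_mono norm_triangle_sub)
  also have "\<dots> = (\<Sum>i=1..I. norm (y i)) + (\<Sum>i=1..I. norm (W u (k + I*B) i - y i))"
    by (rule sum.distrib)
  also have "\<dots> \<le> (1 - real I * \<kappa>^(I*B)) * (\<Sum>i=1..I. norm (W u k i))
     + (\<Sum>t<I*B. \<Sum>i=1..I. norm (ee u (Suc (k+t)) i))"
    using ct ev by simp
  also have "(\<Sum>t<I*B. \<Sum>i=1..I. norm (ee u (Suc (k+t)) i))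
     \<le> (\<Sum>t<I*B. \<Sum>i=1..I. norm (u (Suc (k+t)) i - u (k+t) i) + (\<Sum>j=1..I. norm (u (Suc (k+t)) j - u (k+t) j)))"
    by (intro sum_mono e_bound) auto
  finally show ?thesis by simp
qed

lemma partB:
  fixes u :: "nat \<Rightarrow> nat \<Rightarrow> 'v::real_normed_vector"
  assumes I1: "I \<ge> 1" and lim: "\<forall>i\<in>{1..I}. (\<lambda>k. norm (u (Suc k) i - u k i)) \<longlonglongrightarrow> 0"
    and i: "i\<in>{1..I}"
  shows "(\<lambda>k. norm (track I A u k i - (1 / real I) *\<^sub>R (\<Sum>j=1..I. u k j))) \<longlonglongrightarrow> 0"
proof -
  define T where "T = I*B"
  define \<eta> where "\<eta> = \<kappa>^T"
  define V where "V k = (\<Sum>i=1..I. norm (W u k i))" for k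
  define \<epsilon> where "\<epsilon> k = (\<Sum>t<T. \<Sum>i=1..I. norm (u (Suc (k+t)) i - u (k+t) i) + (\<Sum>j=1..I. norm (u (Suc (k+t)) j - u (k+t) j)))" for k
  have T: "T > 0" using I1 Bpos by (simp add: T_def)
  have \<eta>: "\<eta> > 0" using kpos by (simp add: \<eta>_def)
  have rho1: "1 - real I * \<eta> < 1" using I1 \<eta> by simp
  have rho0: "0 \<le> 1 - real I * \<eta>"
  proof -
    have "(\<Sum>i=1..I. \<eta>) \<le> (\<Sum>i=1..I. P 0 T i 1 )"
      using I1 by (intro sum_mono) (auto simp: \<eta>_def T_def intro!: P_pos)
    also have "\<dots> = 1" using P_col[of 1 0 T] I1 by simp
    finally show ?thesis by simp
  qed
  have L: "(\<lambda>k. norm (u (Suc (k + t)) j - u (k + t) j)) \<longlonglongrightarrow> 0" if j: "j \<in> {1..I}" for t j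
    using LIMSEQ_ignore_initial_segment[OF lim[rule_format, OF j], of t] by simp
  have eps: "\<epsilon> \<longlonglongrightarrow> 0"
    unfolding \<epsilon>_def by (intro tendsto_null_sum tendsto_add_zero L) auto
  have V0: "V \<longlonglongrightarrow> 0"
  proof (rule conv_lemma[OF T rho0 rho1])
    show "\<And>k. 0 \<le> V k" unfolding V_def by (simp add: sum_nonneg)
    show "\<And>k. V (k + T) \<le> (1 - real I * \<eta>) * V k + \<epsilon> k"
      unfolding V_def \<epsilon>_def \<eta>_def T_def by (rule Vrec[OF I1])
  qed (rule eps)
  have bound: "norm (track I A u k i - (1 / real I) *\<^sub>R (\<Sum>j=1..I. u k j)) \<le> V k / \<eta>" if k: "k \<ge> T" for k
  proof -
    have ph: "phi I A k i \<ge> \<eta>" using phi_lb[OF I1 _ i, of k] k by (simp add: \<eta>_def T_def)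
    have "W u k i = phi I A k i *\<^sub>R (track I A u k i - (1 / real I) *\<^sub>R (\<Sum>j=1..I. u k j))"
      unfolding W_def by (simp add: scaleR_right_diff_distrib)
    then have "norm (W u k i) = phi I A k i * norm (track I A u k i - (1 / real I) *\<^sub>R (\<Sum>j=1..I. u k j))"
      using phi_nonneg[OF i, of k] by simp
    then have eq: "norm (track I A u k i - (1 / real I) *\<^sub>R (\<Sum>j=1..I. u k j)) = norm (W u k i) / phi I A k i"
      using ph \<eta> by (simp add: field_simps)
    have "norm (W u k i) \<le> V k" unfolding V_def using i by (intro member_le_sum) auto
    moreover have "0 \<le> V k" unfolding V_def by (simp add: sum_nonneg)
    ultimately show ?thesis unfolding eq using ph \<eta> by (intro frac_le) auto
  qed
  show ?thesis
  proof (rule Lim_null_comparison)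
    show "\<forall>\<^sub>F k in sequentially. norm (norm (track I A u k i - (1 / real I) *\<^sub>R (\<Sum>j=1..I. u k j))) \<le> V k / \<eta>"
      using bound by (auto simp: eventually_sequentially)
    show "(\<lambda>k. V k / \<eta>) \<longlonglongrightarrow> 0" using tendsto_divide_zero[OF V0] by simp
  qed
qed

end

theorem mainTheorem13:
  fixes I B :: nat and \<kappa> :: real
    and E :: "nat \<Rightarrow> (nat \<times> nat) set"
    and A :: "nat \<Rightarrow> nat \<Rightarrow> nat \<Rightarrow> real"
    and u :: "nat \<Rightarrow> nat \<Rightarrow> real ^ 'm"
  assumes "B_strongly_connected I B E"
    and "\<kappa> > 0"
    and "\<And>k. compliant I \<kappa> (E k) (A k)"
    and "\<And>k. column_stochastic I (A k)"
  shows "(\<forall>k. (\<Sum>i=1..I. phi I A k i *\<^sub>R track I A u k i) = (\<Sum>i=1..I. u k i))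
       \<and> ((\<forall>i\<in>{1..I}. (\<lambda>k. norm (u (Suc k) i - u k i)) \<longlonglongrightarrow> 0) \<longrightarrow>
          (\<forall>i\<in>{1..I}. (\<lambda>k. norm (track I A u k i - (1 / real I) *\<^sub>R (\<Sum>j=1..I. u k j))) \<longlonglongrightarrow> 0))"
proof -
  interpret ps I B \<kappa> E A by unfold_locales (use assms in auto)
  show ?thesis
  proof (intro conjI allI impI ballI)
    fix k show "(\<Sum>i=1..I. phi I A k i *\<^sub>R track I A u k i) = (\<Sum>i=1..I. u k i)" by (rule partA)
  next
    fix i assume lim: "\<forall>i\<in>{1..I}. (\<lambda>k. norm (u (Suc k) i - u k i)) \<longlonglongrightarrow> 0" and i: "i \<in> {1..I}"
    have I1: "I \<ge> 1" using i by auto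
    show "(\<lambda>k. norm (track I A u k i - (1 / real I) *\<^sub>R (\<Sum>j=1..I. u k j))) \<longlonglongrightarrow> 0"
      by (rule partB[OF I1 lim i])
  qed
qed

end
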